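(* Let $(R,\delta_R^* )$ be an iterative $q$-difference ring which is an integral domain, and let $S\subset R$ be a multiplicatively closed subset with $0\notin S$ and $\sigma_q(S)\subseteq S$. Then there exists a unique iterative $q$-difference operator $\delta_{S^{-1}R}^*$ on $S^{-1}R$ extending $\delta_R^*$.
   Context: Let $C$ be an algebraically closed field and $q\in C$, $q\ne1$. Let $F=C(t)$ with the automorphism $\sigma_q(f(t))=f(qt)$. $\binom{r}{k}_q$ is the value at $q$ of the Gaussian polynomial $\prod_{i=1}^{k}\frac{1-x^{r-i+1}}{1-x^{i}}\in\mathbb Z[x]$. An iterative $q$-difference ring is a commutative $F$-algebra $R$ with a ring automorphism $\sigma_q$ extending that of $F$ together with an iterative $q$-difference operator, i.e. a family $\delta_R^*=(\delta_R^{(k)})_{k\in\mathbb N}$ of maps $R\to R$ such that for all $a,b\in R$, $i,j,k\in\mathbb N$: $\delta_R^{(0)}=\mathrm{id}$; $\delta_R^{(1)}=\frac{\sigma_q-\mathrm{id}}{(q-1)t}$; $\delta_R^{(k)}$ is additive; $\delta_R^{(k)}(ab)=\sum_{i+j=k}\sigma_q^i(\delta_R^{(j)}(a))\delta_R^{(i)}(b)$; $\delta_R^{(i)}\circ\delta_R^{(j)}=\binom{i+j}{i}_q\delta_R^{(i+j)}$. (On $S^{-1}R$, $\sigma_q$ is extended by $\sigma_q(a/s)=\sigma_q(a)/\sigma_q(s)$.) *)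

theory Defs
  imports "HOL-Computational_Algebra.Polynomial" "HOL-Computational_Algebra.Fraction_Field"
begin

definition alg_closed :: "('c::field) itself \<Rightarrow> bool" where
  "alg_closed _ \<longleftrightarrow> (\<forall>p::'c poly. degree p > 0 \<longrightarrow> (\<exists>x. poly p x = 0))"

text \<open>The Gaussian polynomial prod_{i=1}^k (1 - x^(r-i+1)) / (1 - x^i) in Z[x]
  (the division is exact) and its value at q.\<close>
definition gauss_poly :: "nat \<Rightarrow> nat \<Rightarrow> int poly" where
  "gauss_poly r k = (\<Prod>i=1..k. 1 - monom 1 (r - i + 1)) div (\<Prod>i=1..k. 1 - monom 1 i)"

definition qbinom :: "nat \<Rightarrow> nat \<Rightarrow> 'c::field \<Rightarrow> 'c" where
  "qbinom r k q = poly (map_poly of_int (gauss_poly r k)) q"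

type_synonym 'c ratfun = "'c poly fract"

definition tvar :: "'c::field ratfun" where
  "tvar = Fract [:0, 1:] 1"

definition sigmaF :: "'c::field \<Rightarrow> 'c ratfun \<Rightarrow> 'c ratfun" where
  "sigmaF q f = (SOME g. \<exists>a b. b \<noteq> 0 \<and> f = Fract a b \<and>
                      g = Fract (pcompose a [:0, q:]) (pcompose b [:0, q:]))"

definition ring_hom_fun :: "('a::comm_ring_1 \<Rightarrow> 'b::comm_ring_1) \<Rightarrow> bool" where
  "ring_hom_fun f \<longleftrightarrow> f 1 = 1 \<and> (\<forall>x y. f (x + y) = f x + f y) \<and> (\<forall>x y. f (x * y) = f x * f y)"

definition ring_aut :: "('a::comm_ring_1 \<Rightarrow> 'a) \<Rightarrow> bool" where
  "ring_aut f \<longleftrightarrow> ring_hom_fun f \<and> bij f"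

definition iter_qdiff_op ::
  "'c::field \<Rightarrow> ('c ratfun \<Rightarrow> 'a::comm_ring_1) \<Rightarrow> ('a \<Rightarrow> 'a) \<Rightarrow> 'a set \<Rightarrow> (nat \<Rightarrow> 'a \<Rightarrow> 'a) \<Rightarrow> bool" where
  "iter_qdiff_op q \<iota> \<sigma> A \<delta> \<longleftrightarrow>
     (\<forall>k. \<forall>a\<in>A. \<delta> k a \<in> A) \<and>
     (\<forall>a\<in>A. \<delta> 0 a = a) \<and>
     (\<forall>a\<in>A. \<delta> 1 a = \<iota> (inverse (Fract [:q - 1:] 1 * tvar)) * (\<sigma> a - a)) \<and>
     (\<forall>k. \<forall>a\<in>A. \<forall>b\<in>A. \<delta> k (a + b) = \<delta> k a + \<delta> k b) \<and>
     (\<forall>k. \<forall>a\<in>A. \<forall>b\<in>A. \<delta> k (a * b) = (\<Sum>i\<le>k. (\<sigma> ^^ i) (\<delta> (k - i) a) * \<delta> i b)) \<and>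
     (\<forall>i j. \<forall>a\<in>A. \<delta> i (\<delta> j a) = \<iota> (Fract [:qbinom (i + j) i q:] 1) * \<delta> (i + j) a)"

definition iter_qdiff_ring ::
  "'c::field \<Rightarrow> ('c ratfun \<Rightarrow> 'r::comm_ring_1) \<Rightarrow> ('r \<Rightarrow> 'r) \<Rightarrow> (nat \<Rightarrow> 'r \<Rightarrow> 'r) \<Rightarrow> bool" where
  "iter_qdiff_ring q \<iota> \<sigma> \<delta> \<longleftrightarrow> ring_hom_fun \<iota> \<and> ring_aut \<sigma> \<and>
     (\<forall>f. \<sigma> (\<iota> f) = \<iota> (sigmaF q f)) \<and> iter_qdiff_op q \<iota> \<sigma> UNIV \<delta>"

definition mult_closed :: "'a::comm_ring_1 set \<Rightarrow> bool" where
  "mult_closed S \<longleftrightarrow> 1 \<in> S \<and> (\<forall>x\<in>S. \<forall>y\<in>S. x * y \<in> S)"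

text \<open>For an integral domain R and 0 \<notin> S, the localization S^{-1}R is realised
  as the subring {a/s} of the fraction field of R.\<close>
definition loc :: "'r::idom set \<Rightarrow> 'r fract set" where
  "loc S = {Fract a s | a s. s \<in> S}"

definition loc_sigma :: "('r::idom \<Rightarrow> 'r) \<Rightarrow> 'r fract \<Rightarrow> 'r fract" where
  "loc_sigma \<sigma> x = (SOME y. \<exists>a s. s \<noteq> 0 \<and> x = Fract a s \<and> y = Fract (\<sigma> a) (\<sigma> s))"

definition loc_iota :: "('c ratfun \<Rightarrow> 'r::idom) \<Rightarrow> 'c ratfun \<Rightarrow> 'r fract" where
  "loc_iota \<iota> f = Fract (\<iota> f) 1"

end

theory Submission
  imports Defs "HOL-Computational_Algebra.Primes"
begin


lemma sigmaF_Fract: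
  fixes q :: "'c::field"
  assumes q: "q \<noteq> 0" and b: "b \<noteq> 0"
  shows "sigmaF q (Fract a b) = Fract (pcompose a [:0, q:]) (pcompose b [:0, q:])"
proof -
  let ?p = "[:0, q:]"
  have dp: "degree ?p > 0" using q by simp
  have nz: "\<And>c. c \<noteq> 0 \<Longrightarrow> pcompose c ?p \<noteq> 0" using pcompose_eq_0[OF _ dp] by blast
  show ?thesis unfolding sigmaF_def
  proof (rule someI2)
    show "\<exists>a' b'. b' \<noteq> 0 \<and> Fract a b = Fract a' b' \<and>
      Fract (pcompose a ?p) (pcompose b ?p) = Fract (pcompose a' ?p) (pcompose b' ?p)"
      using b by blast
  next
    fix g assume "\<exists>a' b'. b' \<noteq> 0 \<and> Fract a b = Fract a' b' \<and> g = Fract (pcompose a' ?p) (pcompose b' ?p)"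
    then obtain a' b' where b': "b' \<noteq> 0" and e: "Fract a b = Fract a' b'"
      and g: "g = Fract (pcompose a' ?p) (pcompose b' ?p)" by blast
    from e have "a * b' = a' * b" using b b' by (simp add: eq_fract)
    hence "pcompose (a * b') ?p = pcompose (a' * b) ?p" by simp
    hence "pcompose a' ?p * pcompose b ?p = pcompose a ?p * pcompose b' ?p"
      by (simp add: pcompose_mult mult.commute)
    thus "g = Fract (pcompose a ?p) (pcompose b ?p)" using g nz[OF b] nz[OF b'] by (simp add: eq_fract)
  qed
qed

definition cst :: "'c::field \<Rightarrow> 'c ratfun" where "cst c = Fract [:c:] 1"

lemma cst_add: "cst (a + b) = cst a + cst b" by (simp add: cst_def)
lemma cst_mult: "cst (a * b) = cst a * cst b" by (simp add: cst_def mult.commute)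
lemma cst_1: "cst 1 = 1" by (simp add: cst_def One_fract_def one_pCons)
lemma cst_0: "cst 0 = 0" by (simp add: cst_def Zero_fract_def eq_fract)
lemma cst_diff: "cst (a - b) = cst a - cst b" by (simp add: cst_def)
lemma cst_minus: "cst (- a) = - cst a" by (simp add: cst_def)
lemma cst_inj: "cst a = cst b \<longleftrightarrow> a = b" by (simp add: cst_def eq_fract)
lemma cst_pow: "cst (a ^ n) = cst a ^ n" by (induct n) (simp_all add: cst_1 cst_mult)
lemma cst_of_nat: "cst (of_nat n) = of_nat n" by (induct n) (simp_all add: cst_0 cst_1 cst_add)
lemma cst_sum: "cst (sum f A) = (\<Sum>x\<in>A. cst (f x))"
  by (induct A rule: infinite_finite_induct) (simp_all add: cst_0 cst_add)

lemma sigmaF_cst: "q \<noteq> 0 \<Longrightarrow> sigmaF q (cst c) = cst c"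
  by (simp add: cst_def sigmaF_Fract pcompose_1)

definition TT :: "'c::field \<Rightarrow> 'c ratfun" where "TT q = Fract [:0, q - 1:] 1"

lemma W_eq: "q \<noteq> 1 \<Longrightarrow> inverse (Fract [:q - 1:] 1 * tvar) = inverse (TT q)"
  by (simp add: tvar_def TT_def)

lemma TT_nz: "(q::'c::field) \<noteq> 1 \<Longrightarrow> TT q \<noteq> 0"
  by (simp add: TT_def eq_fract Zero_fract_def)

lemma sigmaF_TT: "(q::'c::field) \<noteq> 0 \<Longrightarrow> sigmaF q (TT q) = cst q * TT q"
  by (simp add: TT_def cst_def sigmaF_Fract pcompose_pCons pcompose_1 mult.commute)

definition Gs :: "nat \<Rightarrow> int poly" where "Gs k = (\<Sum>i<k. monom 1 i)"

lemma Gs_mult: "(1 - monom 1 1) * Gs k = 1 - monom 1 k"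
proof (induct k)
  case 0 thus ?case by (simp add: Gs_def monom_0 one_pCons)
next
  case (Suc k)
  have "(1 - monom 1 1) * Gs (Suc k) = (1 - monom 1 1) * Gs k + (1 - monom 1 1) * monom 1 k"
    by (simp add: Gs_def algebra_simps)
  also have "\<dots> = 1 - monom 1 (Suc k)"
    using Suc by (simp add: algebra_simps mult_monom)
  finally show ?case .
qed

lemma one_minus_monom_nz: "i \<noteq> 0 \<Longrightarrow> (1::int poly) - monom 1 i \<noteq> 0"
proof
  assume "i \<noteq> 0" "(1::int poly) - monom 1 i = 0"
  hence "coeff ((1::int poly) - monom 1 i) i = 0" by simp
  thus False using \<open>i \<noteq> 0\<close> by (simp add: coeff_monom)
qed

lemma poly_map_Gs: "poly (map_poly of_int (Gs k)) (q::'c::field) = (\<Sum>i<k. q ^ i)"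
proof -
  have "map_poly (of_int :: int \<Rightarrow> 'c) (Gs k) = (\<Sum>i<k. monom 1 i)"
    by (rule poly_eqI) (simp add: coeff_map_poly Gs_def coeff_sum coeff_monom of_int_sum[symmetric] if_distrib cong: if_cong)
  thus ?thesis by (simp add: poly_sum poly_monom)
qed

lemma qbinom_0: "qbinom k 0 q = 1"
  by (simp add: qbinom_def gauss_poly_def)

lemma gauss_1: "k \<noteq> 0 \<Longrightarrow> gauss_poly k 1 = Gs k"
proof -
  assume k: "k \<noteq> 0"
  have "gauss_poly k 1 = (1 - monom 1 k) div (1 - monom 1 1)"
    using k by (simp add: gauss_poly_def)
  also have "\<dots> = ((1 - monom 1 1) * Gs k) div (1 - monom 1 1)" by (simp only: Gs_mult)
  also have "\<dots> = Gs k" using one_minus_monom_nz[of 1] by simp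
  finally show ?thesis .
qed

lemma qbinom_1: "k \<noteq> 0 \<Longrightarrow> qbinom k 1 q = (\<Sum>i<k. q ^ i)"
  using gauss_1[of k] by (simp add: qbinom_def poly_map_Gs)

lemma gauss_km1: "gauss_poly (Suc n) n = Gs (Suc n)"
proof (cases n)
  case 0 thus ?thesis by (simp add: gauss_poly_def Gs_def monom_0 one_pCons)
next
  case (Suc m)
  define f where "f = (\<lambda>i. (1::int poly) - monom 1 i)"
  have num: "(\<Prod>i=1..n. 1 - monom 1 (Suc n - i + 1)) = (\<Prod>j=2..Suc n. f j)"
    unfolding f_def
    by (rule prod.reindex_bij_witness[where i="\<lambda>j. n + 2 - j" and j="\<lambda>i. n + 2 - i"]) (auto simp: Suc_diff_le)
  have a: "(\<Prod>j=2..Suc n. f j) = (\<Prod>j=2..n. f j) * f (Suc n)"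
    using Suc by simp
  have b: "(\<Prod>i=1..n. f i) = f 1 * (\<Prod>j=2..n. f j)"
    using Suc by (simp add: prod.atLeast_Suc_atMost numeral_2_eq_2)
  have nz: "(\<Prod>i=1..n. f i) \<noteq> 0"
    using one_minus_monom_nz by (auto simp: f_def prod_zero_iff)
  have "gauss_poly (Suc n) n = (\<Prod>j=2..Suc n. f j) div (\<Prod>i=1..n. f i)"
    unfolding gauss_poly_def num f_def by (rule refl)
  also have "(\<Prod>j=2..Suc n. f j) = (\<Prod>i=1..n. f i) * Gs (Suc n)"
  proof -
    have "f (Suc n) = f 1 * Gs (Suc n)" unfolding f_def by (rule Gs_mult[symmetric])
    thus ?thesis unfolding a b by (simp only: mult_ac)
  qed
  also have "\<dots> div (\<Prod>i=1..n. f i) = Gs (Suc n)" using nz by simp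
  finally show ?thesis .
qed

lemma qbinom_km1: "qbinom (Suc n) n q = (\<Sum>i<Suc n. q ^ i)"
  by (simp add: qbinom_def gauss_km1 poly_map_Gs)

lemma root_unity_sep:
  fixes q :: "'c::field"
  assumes "q ^ j = 1" "j > 0"
  shows "\<exists>m>0. q ^ m = 1 \<and> (of_nat m :: 'c) \<noteq> 0"
  using assms
proof (induct j rule: less_induct)
  case (less j)
  show ?case
  proof (cases "(of_nat j :: 'c) = 0")
    case False thus ?thesis using less by blast
  next
    case True
    hence dv: "CHAR('c) dvd j" by (simp add: of_nat_eq_0_iff_char_dvd)
    have cpos: "CHAR('c) > 0" using True less(3) by (auto simp: CHAR_pos_iff)
    hence pr: "prime CHAR('c)" by (rule prime_CHAR_semidom)
    define p where "p = CHAR('c)"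
    obtain j' where j': "j = p * j'" using dv p_def by (auto elim: dvdE)
    have p1: "p > 1" using pr p_def prime_gt_1_nat by blast
    have j'pos: "j' > 0" using j' less(3) by (cases j') auto
    have j'lt: "j' < j" using j' p1 j'pos by simp
    define y where "y = q ^ j'"
    have yp: "y ^ p = 1" using less(2) j' by (simp add: y_def power_mult[symmetric] mult.commute)
    have fd: "(y + (-1)) ^ p = y ^ p + (-1) ^ p"
      by (rule freshmans_dream) (use pr p_def in auto)
    have m1: "1 + (-1::'c) ^ p = 0"
    proof (cases "odd p")
      case True thus ?thesis by simp
    next
      case False
      hence "p = 2" using pr p_def prime_odd_nat[of p] p1 by (cases "p = 2") auto
      hence "(of_nat 2 :: 'c) = 0" using p_def of_nat_CHAR[where ?'a='c] by simp
      thus ?thesis using \<open>p = 2\<close> by simp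
    qed
    have "(y - 1) ^ p = 0" using fd yp m1 by simp
    hence "y = 1" by simp
    hence "q ^ j' = 1" by (simp add: y_def)
    thus ?thesis using less(1)[OF j'lt _ j'pos] by blast
  qed
qed




lemma sum_single:
  assumes "finite A" "a \<in> A" "\<And>i. i \<in> A \<Longrightarrow> i \<noteq> a \<Longrightarrow> f i = 0"
  shows "sum f A = f a"
proof -
  have "sum f A = f a + sum f (A - {a})" using assms by (simp add: sum.remove)
  also have "sum f (A - {a}) = 0" using assms by (intro sum.neutral) auto
  finally show ?thesis by simp
qed

lemma sum_two:
  assumes "finite A" "a \<in> A" "b \<in> A" "a \<noteq> b" "\<And>i. i \<in> A \<Longrightarrow> i \<noteq> a \<Longrightarrow> i \<noteq> b \<Longrightarrow> f i = 0"
  shows "sum f A = f a + f b"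
proof -
  have "sum f A = f a + sum f (A - {a})" using assms by (simp add: sum.remove)
  also have "sum f (A - {a}) = f b" using assms by (intro sum_single) auto
  finally show ?thesis .
qed

locale qring =
  fixes q :: "'c::field" and \<iota> :: "'c ratfun \<Rightarrow> 'r::idom" and \<sigma> :: "'r \<Rightarrow> 'r"
    and \<delta> :: "nat \<Rightarrow> 'r \<Rightarrow> 'r"
  assumes q1: "q \<noteq> 1" and q0: "q \<noteq> 0" and R: "iter_qdiff_ring q \<iota> \<sigma> \<delta>"
begin

lemma iota_hom: "ring_hom_fun \<iota>" using R by (simp add: iter_qdiff_ring_def)
lemma sig_aut: "ring_aut \<sigma>" using R by (simp add: iter_qdiff_ring_def)
lemma sig_iota: "\<sigma> (\<iota> f) = \<iota> (sigmaF q f)" using R by (simp add: iter_qdiff_ring_def)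
lemma Rop: "iter_qdiff_op q \<iota> \<sigma> UNIV \<delta>" using R by (simp add: iter_qdiff_ring_def)

lemma iota_add: "\<iota> (a + b) = \<iota> a + \<iota> b" using iota_hom by (simp add: ring_hom_fun_def)
lemma iota_mult: "\<iota> (a * b) = \<iota> a * \<iota> b" using iota_hom by (simp add: ring_hom_fun_def)
lemma iota_1: "\<iota> 1 = 1" using iota_hom by (simp add: ring_hom_fun_def)
lemma iota_0: "\<iota> 0 = 0" using iota_add[of 0 0] by (metis add_cancel_right_right add_0)
lemma iota_minus: "\<iota> (- a) = - \<iota> a" using iota_add[of a "-a"] iota_0 by (metis minus_unique add.right_inverse)
lemma iota_diff: "\<iota> (a - b) = \<iota> a - \<iota> b" using iota_add[of a "-b"] iota_minus by simp
lemma iota_inv: "f \<noteq> 0 \<Longrightarrow> \<iota> f * \<iota> (inverse f) = 1"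
  using iota_mult[of f "inverse f"] iota_1 by simp
lemma iota_nz: "f \<noteq> 0 \<Longrightarrow> \<iota> f \<noteq> 0" using iota_inv by fastforce

lemma sig_add: "\<sigma> (a + b) = \<sigma> a + \<sigma> b" using sig_aut by (simp add: ring_aut_def ring_hom_fun_def)
lemma sig_mult: "\<sigma> (a * b) = \<sigma> a * \<sigma> b" using sig_aut by (simp add: ring_aut_def ring_hom_fun_def)
lemma sig_1: "\<sigma> 1 = 1" using sig_aut by (simp add: ring_aut_def ring_hom_fun_def)
lemma sig_inj: "inj \<sigma>" using sig_aut by (simp add: ring_aut_def bij_def)
lemma sig_0: "\<sigma> 0 = 0" using sig_add[of 0 0] by (metis add_cancel_right_right add_0)
lemma sig_minus: "\<sigma> (- a) = - \<sigma> a" using sig_add[of a "-a"] sig_0 by (metis minus_unique add.right_inverse)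
lemma sig_diff: "\<sigma> (a - b) = \<sigma> a - \<sigma> b" using sig_add[of a "-b"] sig_minus by simp
lemma sig_nz: "a \<noteq> 0 \<Longrightarrow> \<sigma> a \<noteq> 0" using sig_inj sig_0 by (metis injD)

lemma sigp_add: "(\<sigma> ^^ n) (a + b) = (\<sigma> ^^ n) a + (\<sigma> ^^ n) b" by (induct n) (simp_all add: sig_add)
lemma sigp_mult: "(\<sigma> ^^ n) (a * b) = (\<sigma> ^^ n) a * (\<sigma> ^^ n) b" by (induct n) (simp_all add: sig_mult)
lemma sigp_1: "(\<sigma> ^^ n) 1 = 1" by (induct n) (simp_all add: sig_1)
lemma sigp_0: "(\<sigma> ^^ n) 0 = 0" by (induct n) (simp_all add: sig_0)
lemma sigp_diff: "(\<sigma> ^^ n) (a - b) = (\<sigma> ^^ n) a - (\<sigma> ^^ n) b" by (induct n) (simp_all add: sig_diff)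
lemma sigp_sum: "(\<sigma> ^^ n) (sum f A) = (\<Sum>x\<in>A. (\<sigma> ^^ n) (f x))"
  by (induct A rule: infinite_finite_induct) (simp_all add: sigp_0 sigp_add)
lemma sigp_pow: "(\<sigma> ^^ n) (a ^ k) = ((\<sigma> ^^ n) a) ^ k" by (induct k) (simp_all add: sigp_mult sigp_1)

definition ic :: "'c \<Rightarrow> 'r" where "ic c = \<iota> (cst c)"

lemma ic_add: "ic (a + b) = ic a + ic b" by (simp add: ic_def cst_add iota_add)
lemma ic_mult: "ic (a * b) = ic a * ic b" by (simp add: ic_def cst_mult iota_mult)
lemma ic_1: "ic 1 = 1" by (simp add: ic_def cst_1 iota_1)
lemma ic_0: "ic 0 = 0" by (simp add: ic_def cst_0 iota_0)
lemma ic_diff: "ic (a - b) = ic a - ic b" by (simp add: ic_def cst_diff iota_diff)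
lemma ic_minus: "ic (- a) = - ic a" by (simp add: ic_def cst_minus iota_minus)
lemma ic_pow: "ic (a ^ n) = ic a ^ n" by (induct n) (simp_all add: ic_1 ic_mult)
lemma ic_of_nat: "ic (of_nat n) = of_nat n" by (induct n) (simp_all add: ic_0 ic_1 ic_add)
lemma ic_sum: "ic (sum f A) = (\<Sum>x\<in>A. ic (f x))"
  by (induct A rule: infinite_finite_induct) (simp_all add: ic_0 ic_add)
lemma ic_nz: "c \<noteq> 0 \<Longrightarrow> ic c \<noteq> 0"
  unfolding ic_def by (rule iota_nz) (simp add: cst_0[symmetric] cst_inj)
lemma ic_inj: "ic a = ic b \<longleftrightarrow> a = b"
  using ic_nz[of "a - b"] ic_diff[of a b] by auto
lemma sig_ic: "\<sigma> (ic c) = ic c" by (simp add: ic_def sig_iota sigmaF_cst q0)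
lemma sigp_ic: "(\<sigma> ^^ n) (ic c) = ic c" by (induct n) (simp_all add: sig_ic)

definition tau :: 'r where "tau = \<iota> (TT q)"
definition WW :: 'r where "WW = \<iota> (inverse (TT q))"

lemma WW_tau: "WW * tau = 1" unfolding WW_def tau_def
  using iota_inv[OF TT_nz[OF q1]] by (simp add: mult.commute)
lemma tau_nz: "tau \<noteq> 0" using WW_tau by auto
lemma sig_tau: "\<sigma> tau = ic q * tau"
  by (simp add: tau_def ic_def sig_iota sigmaF_TT q0 iota_mult)
lemma sigp_tau': "(\<sigma> ^^ n) tau = ic (q ^ n) * tau"
  by (induct n) (simp_all add: sig_tau sig_mult sig_ic ic_mult ic_1 mult_ac)
lemma sigp_tau: "(\<sigma> ^^ n) tau = ic q ^ n * tau"
  using sigp_tau' by (simp add: ic_pow)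

lemma del_closed: True by simp
lemma del0: "\<delta> 0 a = a" using Rop by (simp add: iter_qdiff_op_def)
lemma del1: "\<delta> 1 a = WW * (\<sigma> a - a)"
proof -
  have "\<delta> 1 a = \<iota> (inverse (Fract [:q - 1:] 1 * tvar)) * (\<sigma> a - a)"
    using Rop unfolding iter_qdiff_op_def by blast
  thus ?thesis unfolding W_eq[OF q1] WW_def .
qed
lemma del_add: "\<delta> k (a + b) = \<delta> k a + \<delta> k b" using Rop by (simp add: iter_qdiff_op_def)
lemma del_mult: "\<delta> k (a * b) = (\<Sum>i\<le>k. (\<sigma> ^^ i) (\<delta> (k - i) a) * \<delta> i b)"
  using Rop by (simp add: iter_qdiff_op_def)
lemma del_comp: "\<delta> i (\<delta> j a) = ic (qbinom (i + j) i q) * \<delta> (i + j) a"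
  using Rop by (simp add: iter_qdiff_op_def ic_def cst_def)

lemma sig_eq: "\<sigma> a = a + tau * \<delta> 1 a"
proof -
  have "tau * \<delta> 1 a = (WW * tau) * (\<sigma> a - a)" unfolding del1 by (simp only: mult_ac)
  thus ?thesis by (simp add: WW_tau)
qed

lemma del_0: "\<delta> k 0 = 0" using del_add[of k 0 0] by (metis add_cancel_right_right add_0)
lemma del_minus: "\<delta> k (- a) = - \<delta> k a" using del_add[of k a "-a"] del_0 by (metis minus_unique add.right_inverse)
lemma del_diff: "\<delta> k (a - b) = \<delta> k a - \<delta> k b" using del_add[of k a "-b"] del_minus by simp
lemma del_sum: "\<delta> k (sum f A) = (\<Sum>x\<in>A. \<delta> k (f x))"
  by (induct A rule: infinite_finite_induct) (simp_all add: del_0 del_add)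

lemma del_one: "k > 0 \<Longrightarrow> \<delta> k 1 = 0"
proof (induct k rule: less_induct)
  case (less k)
  have "\<delta> k (1 * 1) = (\<Sum>i\<le>k. (\<sigma> ^^ i) (\<delta> (k - i) 1) * \<delta> i 1)" by (rule del_mult)
  also have "\<dots> = (\<sigma> ^^ 0) (\<delta> (k - 0) 1) * \<delta> 0 1 + (\<sigma> ^^ k) (\<delta> (k - k) 1) * \<delta> k 1"
    using less by (intro sum_two) auto
  finally have "\<delta> k 1 + 0 = \<delta> k 1 + \<delta> k 1" by (simp add: del0 sigp_1)
  thus ?case by (metis add_left_cancel)
qed

end




definition qn :: "'c::field \<Rightarrow> nat \<Rightarrow> 'c" where "qn q n = (\<Sum>i<n. q ^ i)"

lemma qn_geom: "(q - 1) * qn q n = q ^ n - 1"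
  by (induct n) (simp_all add: qn_def algebra_simps)

context qring
begin

lemma sigp_fix: "\<sigma> c = c \<Longrightarrow> (\<sigma> ^^ n) c = c" by (induct n) simp_all

definition dconst :: "'r \<Rightarrow> bool" where "dconst c \<longleftrightarrow> (\<forall>j>0. \<delta> j c = 0) \<and> \<sigma> c = c"

lemma dconst_mult_left:
  assumes "dconst c" shows "\<delta> k (c * y) = c * \<delta> k y"
proof -
  have "\<delta> k (c * y) = (\<Sum>i\<le>k. (\<sigma> ^^ i) (\<delta> (k - i) c) * \<delta> i y)" by (rule del_mult)
  also have "\<dots> = (\<sigma> ^^ k) (\<delta> (k - k) c) * \<delta> k y"
    using assms by (intro sum_single) (auto simp: dconst_def sigp_0)
  finally show ?thesis using assms by (simp add: del0 dconst_def sigp_fix)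
qed

lemma dconst_1: "dconst 1" by (simp add: dconst_def del_one sig_1)
lemma dconst_diff: "dconst a \<Longrightarrow> dconst b \<Longrightarrow> dconst (a - b)"
  by (simp add: dconst_def del_diff sig_diff)
lemma dconst_add: "dconst a \<Longrightarrow> dconst b \<Longrightarrow> dconst (a + b)"
  by (simp add: dconst_def del_add sig_add)
lemma dconst_mult: "dconst a \<Longrightarrow> dconst b \<Longrightarrow> dconst (a * b)"
  using dconst_mult_left by (simp add: dconst_def sig_mult)
lemma dconst_0: "dconst 0" by (simp add: dconst_def del_0 sig_0)

lemma ic_q_expand1:
  assumes IH: "\<And>i. 0 < i \<Longrightarrow> i < j \<Longrightarrow> \<delta> i (ic q) = 0" and j: "j > 0"
  shows "\<delta> j (a * ic q) = \<delta> j a * ic q + (\<sigma> ^^ j) a * \<delta> j (ic q)"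
proof -
  have "\<delta> j (a * ic q) = (\<Sum>i\<le>j. (\<sigma> ^^ i) (\<delta> (j - i) a) * \<delta> i (ic q))" by (rule del_mult)
  also have "\<dots> = (\<sigma> ^^ 0) (\<delta> (j - 0) a) * \<delta> 0 (ic q) + (\<sigma> ^^ j) (\<delta> (j - j) a) * \<delta> j (ic q)"
    using IH j by (intro sum_two) auto
  finally show ?thesis by (simp add: del0)
qed

lemma ic_q_expand2:
  assumes IH: "\<And>i. 0 < i \<Longrightarrow> i < j \<Longrightarrow> \<delta> i (ic q) = 0" and j: "j > 0"
  shows "\<delta> j (ic q * a) = ic q * \<delta> j a + \<delta> j (ic q) * a"
proof -
  have "\<delta> j (ic q * a) = (\<Sum>i\<le>j. (\<sigma> ^^ i) (\<delta> (j - i) (ic q)) * \<delta> i a)" by (rule del_mult)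
  also have "\<dots> = (\<sigma> ^^ j) (\<delta> (j - j) (ic q)) * \<delta> j a + (\<sigma> ^^ 0) (\<delta> (j - 0) (ic q)) * \<delta> 0 a"
    using IH j by (intro sum_two) (auto simp: sigp_0)
  finally show ?thesis by (simp add: del0 sigp_ic)
qed

lemma del_icq: "j > 0 \<Longrightarrow> \<delta> j (ic q) = 0"
proof (induct j rule: less_induct)
  case (less j)
  have IH: "\<And>i. 0 < i \<Longrightarrow> i < j \<Longrightarrow> \<delta> i (ic q) = 0" using less by blast
  define e where "e = \<delta> j (ic q)"
  have "\<delta> j (ic q * tau) = \<delta> j (tau * ic q)" by (simp add: mult.commute)
  hence "ic q * \<delta> j tau + e * tau = \<delta> j tau * ic q + (ic q ^ j * tau) * e"
    using ic_q_expand1[OF IH less(2), of tau] ic_q_expand2[OF IH less(2), of tau]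
    by (simp add: e_def sigp_tau)
  hence "ic (q ^ j - 1) * (tau * e) = 0" by (simp add: ic_diff ic_pow ic_1 algebra_simps)
  hence c1: "q ^ j = 1 \<or> e = 0" using ic_nz[of "q ^ j - 1"] tau_nz by auto
  show ?case
  proof (cases "q ^ j = 1")
    case False thus ?thesis using c1 e_def by simp
  next
    case True
    then obtain m where m: "m > 0" "q ^ m = 1" "(of_nat m :: 'c) \<noteq> 0"
      using root_unity_sep less(2) by blast
    have claim: "ic q * \<delta> j (ic (q ^ r)) = ic (of_nat r * q ^ r) * e" for r
    proof (induct r)
      case 0 thus ?case using less(2) by (simp add: ic_1 ic_0 del_one)
    next
      case (Suc r)
      have "\<delta> j (ic (q ^ Suc r)) = \<delta> j (ic (q ^ r)) * ic q + ic (q ^ r) * e"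
        unfolding e_def using ic_q_expand1[OF IH less(2), of "ic (q ^ r)"]
        by (simp add: ic_mult sigp_ic mult.commute)
      hence "ic q * \<delta> j (ic (q ^ Suc r)) = (ic q * \<delta> j (ic (q ^ r))) * ic q + ic q * ic (q ^ r) * e"
        by (simp add: algebra_simps)
      also have "\<dots> = ic (of_nat (Suc r) * q ^ Suc r) * e"
        unfolding Suc by (simp add: ic_mult[symmetric] ic_add algebra_simps)
      finally show ?case .
    qed
    from claim[of m] have "ic (of_nat m) * e = 0" using m less(2) by (simp add: ic_1 del_one)
    thus ?thesis using ic_nz[OF m(3)] e_def by simp
  qed
qed

lemma dconst_icq: "dconst (ic q)" using del_icq by (simp add: dconst_def sig_ic)

lemma dconst_ic_poly: "dconst (ic (q - 1))" using dconst_diff[OF dconst_icq dconst_1] by (simp add: ic_diff ic_1)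

definition kappa :: 'r where "kappa = ic (q - 1)"

lemma dconst_kappa: "dconst kappa" by (simp add: kappa_def dconst_ic_poly)
lemma sig_kappa: "\<sigma> kappa = kappa" using dconst_kappa by (simp add: dconst_def)
lemma kappa_nz: "kappa \<noteq> 0" using ic_nz q1 by (simp add: kappa_def)

lemma del1_tau: "\<delta> 1 tau = kappa"
proof -
  have "\<delta> 1 tau = WW * (ic q * tau - tau)" by (simp only: del1 sig_tau)
  also have "\<dots> = (WW * tau) * (ic q - 1)" by (simp add: algebra_simps)
  finally have "\<delta> 1 tau = (WW * tau) * (ic q - 1)" .
  thus ?thesis by (simp add: WW_tau kappa_def ic_diff ic_1)
qed

lemma comm11: "\<delta> 1 (\<delta> k a) = \<delta> k (\<delta> 1 a)"
  using qbinom_1[of "Suc k" q] qbinom_km1[of k q] by (simp add: del_comp)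

lemma del_k_1: "\<delta> k (\<delta> 1 a) = ic (qn q (Suc k)) * \<delta> (Suc k) a"
  using qbinom_km1[of k q] by (simp add: del_comp qn_def)

lemma del_1_k: "\<delta> 1 (\<delta> k a) = ic (qn q (Suc k)) * \<delta> (Suc k) a"
  using comm11 del_k_1 by simp

end


context qring
begin

lemma sig_icpow: "\<sigma> (ic c ^ n) = ic c ^ n" by (simp add: ic_pow[symmetric] sig_ic)

lemma del1_tau': "\<delta> (Suc 0) tau = kappa" using del1_tau by simp
lemma del_k_1': "\<delta> k (\<delta> (Suc 0) a) = ic (qn q (Suc k)) * \<delta> (Suc k) a" using del_k_1 by simp
lemma del_1_k': "\<delta> (Suc 0) (\<delta> k a) = ic (qn q (Suc k)) * \<delta> (Suc k) a" using del_1_k by simp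

lemma del1_mult: "\<delta> 1 (a * b) = \<delta> 1 a * b + \<sigma> a * \<delta> 1 b"
  using del_mult[of 1 a b] by (simp add: del0)

lemma del_tau_high: "k \<ge> 2 \<Longrightarrow> \<delta> k tau = 0"
proof (induct k rule: less_induct)
  case (less k)
  have IH: "\<And>j. 2 \<le> j \<Longrightarrow> j < k \<Longrightarrow> \<delta> j tau = 0" using less by blast
  define c where "c = \<delta> k tau"
  obtain n where kn: "k = Suc n" and n1: "n \<ge> 1" using less(2) by (cases k) auto
  have "\<delta> n (\<delta> 1 tau) = ic (qn q k) * c" using del_k_1 kn c_def by simp
  moreover have "\<delta> n (\<delta> 1 tau) = 0" using del1_tau dconst_kappa n1 by (simp add: dconst_def)
  ultimately have a: "ic (qn q k) * c = 0" by simp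
  show ?case
  proof (cases "qn q k = 0")
    case False thus ?thesis using a ic_nz c_def by auto
  next
    case True
    hence qk: "q ^ k = 1" using qn_geom[of q k] by simp
    have dc: "\<delta> 1 c = 0" using comm11[of k tau] del1_tau dconst_kappa less(2)
      by (simp add: c_def dconst_def)
    have sc: "\<sigma> c = c" using sig_eq[of c] dc by simp
    define E where "E = (if k = 2 then kappa * kappa else 0)"
    have dE: "dconst E" using dconst_kappa dconst_mult dconst_0 by (simp add: E_def)
    have X: "\<delta> k (tau * tau) = c * tau + tau * c + E"
    proof (cases "k = 2")
      case True
      have "\<delta> k (tau * tau) = (\<Sum>i\<le>2. (\<sigma> ^^ i) (\<delta> (2 - i) tau) * \<delta> i tau)"
        using del_mult True by simp
      also have "\<dots> = c * tau + kappa * kappa + ic q ^ 2 * tau * c"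
        using True by (simp add: numeral_2_eq_2 del0 c_def del1_tau del1_tau' sig_kappa sig_tau sig_mult sig_ic
           power2_eq_square mult_ac)
      moreover have "ic q ^ 2 = 1" using qk True by (simp add: ic_pow[symmetric] ic_1)
      ultimately show ?thesis using True by (simp add: E_def)
    next
      case False
      hence k3: "k \<ge> 3" using less(2) by simp
      have "\<delta> k (tau * tau) = (\<Sum>i\<le>k. (\<sigma> ^^ i) (\<delta> (k - i) tau) * \<delta> i tau)" by (rule del_mult)
      also have "\<dots> = (\<sigma> ^^ 0) (\<delta> (k - 0) tau) * \<delta> 0 tau + (\<sigma> ^^ k) (\<delta> (k - k) tau) * \<delta> k tau"
      proof (intro sum_two)
        fix i assume i: "i \<in> {..k}" "i \<noteq> 0" "i \<noteq> k"
        show "(\<sigma> ^^ i) (\<delta> (k - i) tau) * \<delta> i tau = 0"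
        proof (cases "i = 1")
          case True thus ?thesis using IH[of "k - 1"] k3 by (simp add: sigp_0 sig_0)
        next
          case False thus ?thesis using IH[of i] i by simp
        qed
      qed (use k3 in auto)
      moreover have "ic q ^ k = 1" using qk by (simp add: ic_pow[symmetric] ic_1)
      ultimately show ?thesis using False by (simp add: E_def del0 c_def sigp_tau)
    qed
    have lhs: "\<delta> 1 (\<delta> k (tau * tau)) = c * kappa + kappa * c"
    proof -
      have "\<delta> 1 (c * tau) = c * kappa" by (simp only: del1_mult dc sc del1_tau del0) simp
      moreover have "\<delta> 1 (tau * c) = kappa * c" by (simp only: del1_mult dc sc del1_tau del0) simp
      moreover have "\<delta> 1 E = 0" using dE by (simp add: dconst_def)
      ultimately show ?thesis unfolding X by (simp only: del_add) simp
    qed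
    have "\<delta> 1 (tau * tau) = (kappa + ic q * kappa) * tau"
      by (simp only: del1_mult del1_tau sig_tau) (simp add: algebra_simps)
    hence rhs: "\<delta> k (\<delta> 1 (tau * tau)) = (kappa + ic q * kappa) * c"
      using dconst_mult_left[of "kappa + ic q * kappa" k tau] dconst_add dconst_mult dconst_kappa dconst_icq
      by (simp add: c_def)
    have "c * kappa + kappa * c = (kappa + ic q * kappa) * c" using lhs rhs comm11 by simp
    hence "ic (1 - q) * (kappa * c) = 0" by (simp add: ic_diff ic_1 algebra_simps)
    thus ?thesis using ic_nz[of "1 - q"] q1 kappa_nz c_def by auto
  qed
qed

lemma del_tau_mult: "\<delta> N (tau * b) = ic q ^ N * tau * \<delta> N b + (if N > 0 then kappa * \<delta> (N - 1) b else 0)"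
proof (cases N)
  case 0 thus ?thesis by (simp add: del0)
next
  case (Suc n)
  have "\<delta> N (tau * b) = (\<Sum>i\<le>N. (\<sigma> ^^ i) (\<delta> (N - i) tau) * \<delta> i b)" by (rule del_mult)
  also have "\<dots> = (\<sigma> ^^ N) (\<delta> (N - N) tau) * \<delta> N b + (\<sigma> ^^ (N - 1)) (\<delta> (N - (N - 1)) tau) * \<delta> (N - 1) b"
    using Suc by (intro sum_two) (auto simp: del_tau_high sigp_0)
  finally show ?thesis using Suc by (simp add: del0 sigp_tau del1_tau del1_tau' sigp_fix sig_kappa sig_mult sig_ic sig_icpow sig_tau mult_ac)
qed

lemma del_mult_tau: "\<delta> k (b * tau) = \<delta> k b * tau + (if k > 0 then \<sigma> (\<delta> (k - 1) b) * kappa else 0)"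
proof (cases k)
  case 0 thus ?thesis by (simp add: del0)
next
  case (Suc n)
  have "\<delta> k (b * tau) = (\<Sum>i\<le>k. (\<sigma> ^^ i) (\<delta> (k - i) b) * \<delta> i tau)" by (rule del_mult)
  also have "\<dots> = (\<sigma> ^^ 0) (\<delta> (k - 0) b) * \<delta> 0 tau + (\<sigma> ^^ 1) (\<delta> (k - 1) b) * \<delta> 1 tau"
    using Suc by (intro sum_two) (auto simp: del_tau_high)
  finally show ?thesis using Suc by (simp add: del0 del1_tau del1_tau')
qed

lemma del_sig: "\<delta> N (\<sigma> a) = ic q ^ N * \<sigma> (\<delta> N a)"
proof (cases N)
  case 0 thus ?thesis by (simp add: del0)
next
  case (Suc n)
  have e1: "\<delta> N (\<sigma> a) = \<delta> N a + ic q ^ N * tau * (ic (qn q (Suc N)) * \<delta> (Suc N) a)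
            + kappa * (ic (qn q N) * \<delta> N a)"
    using Suc by (simp add: sig_eq[of a] del_add del_tau_mult del_k_1 del_k_1')
  have e2: "\<sigma> (\<delta> N a) = \<delta> N a + tau * (ic (qn q (Suc N)) * \<delta> (Suc N) a)"
    by (simp add: sig_eq[of "\<delta> N a"] del_1_k del_1_k')
  have g: "kappa * ic (qn q N) = ic q ^ N - 1"
  proof -
    have "kappa * ic (qn q N) = ic ((q - 1) * qn q N)" by (simp only: kappa_def ic_mult)
    also have "\<dots> = ic q ^ N - 1" by (simp only: qn_geom ic_diff ic_pow ic_1)
    finally show ?thesis .
  qed
  have "kappa * (ic (qn q N) * \<delta> N a) = (ic q ^ N - 1) * \<delta> N a"
    by (simp add: g mult.assoc[symmetric])
  thus ?thesis unfolding e1 e2 by (simp add: algebra_simps)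
qed

lemma sigp_dconst: "dconst c \<Longrightarrow> (\<sigma> ^^ n) c = c" by (simp add: dconst_def sigp_fix)

lemma del_tau_pow: "(k > r \<longrightarrow> \<delta> k (tau ^ r) = 0) \<and> \<delta> r (tau ^ r) = kappa ^ r"
proof (induct r arbitrary: k)
  case 0 thus ?case by (simp add: del_one del0)
next
  case (Suc r)
  have A: "\<delta> k (tau ^ Suc r) = \<delta> k (tau ^ r) * tau + (if k > 0 then \<sigma> (\<delta> (k - 1) (tau ^ r)) * kappa else 0)" for k
    using del_mult_tau[of k "tau ^ r"] by (simp add: mult.commute)
  have B: "k > Suc r \<longrightarrow> \<delta> k (tau ^ Suc r) = 0" for k
    using Suc[of k] Suc[of "k - 1"] A[of k] by (auto simp: sig_0)
  have C: "\<delta> (Suc r) (tau ^ Suc r) = kappa ^ Suc r"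
    using Suc[of "Suc r"] Suc[of r] A[of "Suc r"] dconst_kappa
    by (simp add: sig_kappa sigp_pow[of 1, simplified] mult.commute)
  show ?case using B C by blast
qed

end




definition Lset :: "nat \<Rightarrow> nat \<Rightarrow> nat \<Rightarrow> nat set" where
  "Lset i j n = {l. l \<le> i \<and> l \<le> n \<and> n - l \<le> j}"

lemma finite_Lset: "finite (Lset i j n)"
  by (rule finite_subset[of _ "{..i}"]) (auto simp: Lset_def)

lemma sum_reindex_lm:
  "(\<Sum>l\<le>i. \<Sum>m\<le>j. f l m) = (\<Sum>n\<le>i+j. \<Sum>l\<in>Lset i j n. f l (n - l))"
proof -
  have "(\<Sum>l\<le>i. \<Sum>m\<le>j. f l m) = (\<Sum>(l,m)\<in>{..i}\<times>{..j}. f l m)"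
    by (simp add: sum.cartesian_product)
  also have "\<dots> = (\<Sum>(n,l)\<in>Sigma {..i+j} (Lset i j). f l (n - l))"
    by (rule sum.reindex_bij_witness[where i="\<lambda>(n,l). (l, n - l)" and j="\<lambda>(l,m). (l + m, l)"])
       (auto simp: Lset_def)
  also have "\<dots> = (\<Sum>n\<le>i+j. \<Sum>l\<in>Lset i j n. f l (n - l))"
    by (simp add: sum.Sigma finite_Lset)
  finally show ?thesis .
qed

lemma double_expand:
  fixes d :: "nat \<Rightarrow> 'a::comm_ring_1 \<Rightarrow> 'a" and s :: "'a \<Rightarrow> 'a" and A :: "'a set"
  assumes cl: "\<And>k x. x \<in> A \<Longrightarrow> d k x \<in> A"
    and scl: "\<And>x. x \<in> A \<Longrightarrow> s x \<in> A"
    and addA: "\<And>x y. x \<in> A \<Longrightarrow> y \<in> A \<Longrightarrow> x + y \<in> A"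
    and multA: "\<And>x y. x \<in> A \<Longrightarrow> y \<in> A \<Longrightarrow> x * y \<in> A"
    and zeroA: "0 \<in> A"
    and add: "\<And>k x y. x \<in> A \<Longrightarrow> y \<in> A \<Longrightarrow> d k (x + y) = d k x + d k y"
    and mult: "\<And>k x y. x \<in> A \<Longrightarrow> y \<in> A \<Longrightarrow> d k (x * y) = (\<Sum>i\<le>k. (s ^^ i) (d (k - i) x) * d i y)"
    and comm: "\<And>k x. x \<in> A \<Longrightarrow> d k (s x) = Q ^ k * s (d k x)"
    and sadd: "\<And>x y. s (x + y) = s x + s y" and smult: "\<And>x y. s (x * y) = s x * s y"
    and s1: "s 1 = 1" and sQ: "s Q = Q"
    and x: "x \<in> A" and y: "y \<in> A"
  shows "d i (d j (x * y)) = (\<Sum>l\<le>i. \<Sum>m\<le>j. Q ^ (m * (i - l)) * (s ^^ (l + m)) (d (i - l) (d (j - m) x)) * d l (d m y))"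
proof -
  have d0: "d k 0 = 0" for k using add[OF zeroA zeroA, of k] by simp
  have sumA: "finite M \<Longrightarrow> (\<forall>m\<in>M. f m \<in> A) \<Longrightarrow> sum f M \<in> A" for M and f :: "nat \<Rightarrow> 'a"
    by (induct M rule: finite_induct) (auto intro: addA zeroA)
  have dsum: "finite M \<Longrightarrow> (\<forall>m\<in>M. f m \<in> A) \<Longrightarrow> d k (sum f M) = (\<Sum>m\<in>M. d k (f m))" for M k and f :: "nat \<Rightarrow> 'a"
    by (induct M rule: finite_induct) (auto simp: d0 add sumA)
  have spA: "z \<in> A \<Longrightarrow> (s ^^ n) z \<in> A" for n z by (induct n) (auto intro: scl)
  have spmult: "(s ^^ n) (a * b) = (s ^^ n) a * (s ^^ n) b" for n a b by (induct n) (simp_all add: smult)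
  have spQ: "(s ^^ n) (Q ^ k) = Q ^ k" for n k
  proof (induct n)
    case (Suc n)
    have "s (Q ^ k) = Q ^ k" by (induct k) (simp_all add: s1 smult sQ)
    thus ?case using Suc by simp
  qed simp
  have sQk: "s (Q ^ k) = Q ^ k" for k using spQ[of 1 k] by simp
  have commp: "z \<in> A \<Longrightarrow> d k ((s ^^ m) z) = Q ^ (m * k) * (s ^^ m) (d k z)" for k m z
  proof (induct m)
    case 0 thus ?case by simp
  next
    case (Suc m)
    have "d k ((s ^^ Suc m) z) = Q ^ k * s (d k ((s ^^ m) z))" using comm spA[OF Suc(2)] by simp
    also have "\<dots> = Q ^ (Suc m * k) * (s ^^ Suc m) (d k z)"
      using Suc by (simp add: smult sQk power_add mult_ac)
    finally show ?case .
  qed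
  have "d i (d j (x * y)) = d i (\<Sum>m\<le>j. (s ^^ m) (d (j - m) x) * d m y)" using mult x y by simp
  also have "\<dots> = (\<Sum>m\<le>j. d i ((s ^^ m) (d (j - m) x) * d m y))"
    using x y by (intro dsum) (auto intro: multA spA cl)
  also have "\<dots> = (\<Sum>m\<le>j. \<Sum>l\<le>i. Q ^ (m * (i - l)) * (s ^^ (l + m)) (d (i - l) (d (j - m) x)) * d l (d m y))"
  proof (rule sum.cong[OF refl])
    fix m
    have "d i ((s ^^ m) (d (j - m) x) * d m y) = (\<Sum>l\<le>i. (s ^^ l) (d (i - l) ((s ^^ m) (d (j - m) x))) * d l (d m y))"
      using x y by (intro mult) (auto intro: spA cl)
    also have "\<dots> = (\<Sum>l\<le>i. Q ^ (m * (i - l)) * (s ^^ (l + m)) (d (i - l) (d (j - m) x)) * d l (d m y))"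
      using x by (intro sum.cong[OF refl]) (simp add: commp cl spmult spQ funpow_add)
    finally show "d i ((s ^^ m) (d (j - m) x) * d m y) = \<dots>" .
  qed
  also have "\<dots> = (\<Sum>l\<le>i. \<Sum>m\<le>j. Q ^ (m * (i - l)) * (s ^^ (l + m)) (d (i - l) (d (j - m) x)) * d l (d m y))"
    by (rule sum.swap)
  finally show ?thesis .
qed


context qring
begin

lemma R_double_expand:
  "\<delta> i (\<delta> j (x * y)) = (\<Sum>l\<le>i. \<Sum>m\<le>j. ic q ^ (m * (i - l)) * (\<sigma> ^^ (l + m)) (\<delta> (i - l) (\<delta> (j - m) x)) * \<delta> l (\<delta> m y))"
  by (rule double_expand[where A=UNIV]) (simp_all add: del_add del_mult del_sig sig_add sig_mult sig_1 sig_ic)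

lemma qvand:
  assumes iN: "i \<le> N" and nN: "n \<le> N"
  shows "(\<Sum>l\<in>Lset i (N - i) n. q ^ ((n - l) * (i - l)) * qbinom (N - n) (i - l) q * qbinom n l q) = qbinom N i q"
proof -
  define j where "j = N - i"
  have Nij: "N = i + j" using iN j_def by simp
  define a where "a = tau ^ (N - n)"
  define b where "b = tau ^ n"
  define g where "g = (\<lambda>n'. (\<sigma> ^^ n') (\<delta> (N - n') a) * \<delta> n' b)"
  have gz: "n' \<le> N \<Longrightarrow> n' \<noteq> n \<Longrightarrow> g n' = 0" for n'
  proof -
    assume "n' \<le> N" "n' \<noteq> n"
    hence "n' < n \<or> n' > n" by auto
    thus "g n' = 0"
    proof
      assume "n' < n" hence "N - n' > N - n" using nN by simp
      thus ?thesis using del_tau_pow[of "N - n" "N - n'"] by (simp add: g_def a_def sigp_0)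
    next
      assume "n' > n" thus ?thesis using del_tau_pow[of n n'] by (simp add: g_def b_def)
    qed
  qed
  have gn: "g n = kappa ^ N"
    using del_tau_pow[of "N - n"] del_tau_pow[of n] nN
    by (simp add: g_def a_def b_def sigp_pow sigp_fix sig_kappa power_add[symmetric])
  define w where "w = (\<lambda>l n'. q ^ ((n' - l) * (i - l)) * qbinom (N - n') (i - l) q * qbinom n' l q)"
  have "\<delta> i (\<delta> j (a * b)) = ic (qbinom N i q) * \<delta> N (a * b)" using del_comp Nij by simp
  also have "\<delta> N (a * b) = (\<Sum>n'\<le>N. g n')" by (simp add: del_mult g_def)
  also have "\<dots> = g n" using gz nN by (intro sum_single) auto
  finally have lhs: "\<delta> i (\<delta> j (a * b)) = ic (qbinom N i q) * kappa ^ N" using gn by simp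
  have "\<delta> i (\<delta> j (a * b)) = (\<Sum>l\<le>i. \<Sum>m\<le>j. ic q ^ (m * (i - l)) * (\<sigma> ^^ (l + m)) (\<delta> (i - l) (\<delta> (j - m) a)) * \<delta> l (\<delta> m b))"
    by (rule R_double_expand)
  also have "\<dots> = (\<Sum>l\<le>i. \<Sum>m\<le>j. ic (w l (l + m)) * g (l + m))"
  proof (intro sum.cong refl)
    fix l m assume l: "l \<in> {..i}" and m: "m \<in> {..j}"
    have e: "i - l + (j - m) = N - (l + m)" using l m Nij by auto
    show "ic q ^ (m * (i - l)) * (\<sigma> ^^ (l + m)) (\<delta> (i - l) (\<delta> (j - m) a)) * \<delta> l (\<delta> m b) = ic (w l (l + m)) * g (l + m)"
      by (simp add: del_comp e w_def g_def ic_mult ic_pow sigp_mult sigp_ic power_mult mult_ac)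
  qed
  also have "\<dots> = (\<Sum>n'\<le>i+j. \<Sum>l\<in>Lset i j n'. ic (w l (l + (n' - l))) * g (l + (n' - l)))"
    by (rule sum_reindex_lm)
  also have "\<dots> = (\<Sum>n'\<le>N. ic (\<Sum>l\<in>Lset i j n'. w l n') * g n')"
    unfolding Nij[symmetric] ic_sum sum_distrib_right
    by (intro sum.cong refl) (auto simp: Lset_def)
  also have "\<dots> = ic (\<Sum>l\<in>Lset i j n. w l n) * g n"
    using gz nN by (intro sum_single) auto
  finally have "ic (\<Sum>l\<in>Lset i j n. w l n) * kappa ^ N = ic (qbinom N i q) * kappa ^ N"
    using lhs gn by (metis mult.commute)
  hence "ic (\<Sum>l\<in>Lset i j n. w l n) = ic (qbinom N i q)" using kappa_nz by simp
  thus ?thesis by (simp add: ic_inj w_def j_def)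
qed

end




locale qloc = qring q \<iota> \<sigma> \<delta> for q :: "'c::field" and \<iota> :: "'c ratfun \<Rightarrow> 'r::idom" and \<sigma> \<delta> +
  fixes S :: "'r set"
  assumes Smc: "mult_closed S" and S0: "0 \<notin> S" and Ssig: "\<sigma> ` S \<subseteq> S"
begin

lemma S1: "1 \<in> S" using Smc by (simp add: mult_closed_def)
lemma Smult: "s \<in> S \<Longrightarrow> t \<in> S \<Longrightarrow> s * t \<in> S" using Smc by (simp add: mult_closed_def)
lemma Snz: "s \<in> S \<Longrightarrow> s \<noteq> 0" using S0 by auto
lemma Ssig': "s \<in> S \<Longrightarrow> \<sigma> s \<in> S" using Ssig by auto
lemma Ssigp: "s \<in> S \<Longrightarrow> (\<sigma> ^^ n) s \<in> S" by (induct n) (auto simp: Ssig')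

abbreviation sL where "sL \<equiv> loc_sigma \<sigma>"

lemma sL_Fract: assumes s: "s \<noteq> 0" shows "sL (Fract a s) = Fract (\<sigma> a) (\<sigma> s)"
  unfolding loc_sigma_def
proof (rule someI2)
  show "\<exists>a' s'. s' \<noteq> 0 \<and> Fract a s = Fract a' s' \<and> Fract (\<sigma> a) (\<sigma> s) = Fract (\<sigma> a') (\<sigma> s')"
    using s by blast
next
  fix y assume "\<exists>a' s'. s' \<noteq> 0 \<and> Fract a s = Fract a' s' \<and> y = Fract (\<sigma> a') (\<sigma> s')"
  then obtain a' s' where s': "s' \<noteq> 0" and e: "Fract a s = Fract a' s'" and y: "y = Fract (\<sigma> a') (\<sigma> s')"
    by blast
  from e s s' have "a * s' = a' * s" by (simp add: eq_fract)
  hence "\<sigma> a * \<sigma> s' = \<sigma> a' * \<sigma> s" by (metis sig_mult)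
  thus "y = Fract (\<sigma> a) (\<sigma> s)" using y s s' sig_nz by (simp add: eq_fract)
qed

definition emb :: "'r \<Rightarrow> 'r fract" where "emb r = Fract r 1"

lemma emb_add: "emb (a + b) = emb a + emb b" by (simp add: emb_def)
lemma emb_mult: "emb (a * b) = emb a * emb b" by (simp add: emb_def)
lemma emb_1: "emb 1 = 1" by (simp add: emb_def One_fract_def)
lemma emb_0: "emb 0 = 0" by (simp add: emb_def Zero_fract_def)
lemma emb_diff: "emb (a - b) = emb a - emb b" by (simp add: emb_def)
lemma emb_minus: "emb (- a) = - emb a" by (simp add: emb_def)
lemma emb_sum: "emb (sum f A) = (\<Sum>x\<in>A. emb (f x))"
  by (induct A rule: infinite_finite_induct) (simp_all add: emb_0 emb_add)
lemma emb_pow: "emb (a ^ n) = emb a ^ n" by (induct n) (simp_all add: emb_1 emb_mult)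
lemma emb_inj: "emb a = emb b \<longleftrightarrow> a = b" by (simp add: emb_def eq_fract)
lemma emb_nz: "a \<noteq> 0 \<Longrightarrow> emb a \<noteq> 0" using emb_inj[of a 0] emb_0 by simp
lemma Fract_emb: "s \<noteq> 0 \<Longrightarrow> Fract a s = emb a / emb s"
  by (simp add: emb_def)

lemma sL_emb: "sL (emb r) = emb (\<sigma> r)" by (simp add: emb_def sL_Fract sig_1)

lemma sL_add: "sL (x + y) = sL x + sL y"
proof (cases x, cases y)
  fix a b c d assume x: "x = Fract a b" "b \<noteq> 0" and y: "y = Fract c d" "d \<noteq> 0"
  thus ?thesis by (simp add: sL_Fract sig_nz sig_add sig_mult)
qed
lemma sL_mult: "sL (x * y) = sL x * sL y"
proof (cases x, cases y)
  fix a b c d assume x: "x = Fract a b" "b \<noteq> 0" and y: "y = Fract c d" "d \<noteq> 0"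
  thus ?thesis by (simp add: sL_Fract sig_nz sig_mult)
qed
lemma sL_1: "sL 1 = 1" using sL_emb[of 1] by (simp add: emb_1 sig_1)
lemma sL_0: "sL 0 = 0" using sL_emb[of 0] by (simp add: emb_0 sig_0)
lemma sL_minus: "sL (- x) = - sL x" using sL_add[of x "-x"] sL_0 by (metis minus_unique add.right_inverse)
lemma sL_diff: "sL (x - y) = sL x - sL y" using sL_add[of x "-y"] sL_minus by simp
lemma sL_div: "sL (x / y) = sL x / sL y"
proof (cases "y = 0")
  case True thus ?thesis by (simp add: sL_0)
next
  case False
  hence "sL (x / y) * sL y = sL x" by (metis sL_mult divide_eq_eq)
  moreover have "sL y \<noteq> 0"
  proof
    assume "sL y = 0" hence "sL (y * inverse y) = 0" by (simp add: sL_mult)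
    thus False using False sL_1 by simp
  qed
  ultimately show ?thesis by (simp add: eq_divide_eq)
qed

lemma sLp_add: "(sL ^^ n) (x + y) = (sL ^^ n) x + (sL ^^ n) y" by (induct n) (simp_all add: sL_add)
lemma sLp_mult: "(sL ^^ n) (x * y) = (sL ^^ n) x * (sL ^^ n) y" by (induct n) (simp_all add: sL_mult)
lemma sLp_1: "(sL ^^ n) 1 = 1" by (induct n) (simp_all add: sL_1)
lemma sLp_0: "(sL ^^ n) 0 = 0" by (induct n) (simp_all add: sL_0)
lemma sLp_diff: "(sL ^^ n) (x - y) = (sL ^^ n) x - (sL ^^ n) y" by (induct n) (simp_all add: sL_diff)
lemma sLp_minus: "(sL ^^ n) (- x) = - (sL ^^ n) x" by (induct n) (simp_all add: sL_minus)
lemma sLp_div: "(sL ^^ n) (x / y) = (sL ^^ n) x / (sL ^^ n) y" by (induct n) (simp_all add: sL_div)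
lemma sLp_sum: "(sL ^^ n) (sum f A) = (\<Sum>x\<in>A. (sL ^^ n) (f x))"
  by (induct A rule: infinite_finite_induct) (simp_all add: sLp_0 sLp_add)
lemma sLp_emb: "(sL ^^ n) (emb r) = emb ((\<sigma> ^^ n) r)" by (induct n) (simp_all add: sL_emb)
lemma sLp_pow: "(sL ^^ n) (x ^ k) = ((sL ^^ n) x) ^ k" by (induct k) (simp_all add: sLp_mult sLp_1)

definition EC :: "'c \<Rightarrow> 'r fract" where "EC c = emb (ic c)"
lemma sLp_EC: "(sL ^^ n) (EC c) = EC c" by (simp add: EC_def sLp_emb sigp_ic)
lemma sL_EC: "sL (EC c) = EC c" using sLp_EC[of 1] by simp

abbreviation L where "L \<equiv> loc S"

lemma L_Fract: "s \<in> S \<Longrightarrow> Fract a s \<in> L" by (auto simp: loc_def)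
lemma L_emb: "emb r \<in> L" unfolding emb_def using S1 by (rule L_Fract)
lemma L_cases: "x \<in> L \<Longrightarrow> (\<And>a s. s \<in> S \<Longrightarrow> x = Fract a s \<Longrightarrow> P) \<Longrightarrow> P" by (auto simp: loc_def)
lemma L_add: "x \<in> L \<Longrightarrow> y \<in> L \<Longrightarrow> x + y \<in> L"
  by (elim L_cases) (simp add: Snz L_Fract Smult)
lemma L_mult: "x \<in> L \<Longrightarrow> y \<in> L \<Longrightarrow> x * y \<in> L"
  by (elim L_cases) (simp add: L_Fract Smult)
lemma L_minus: "x \<in> L \<Longrightarrow> - x \<in> L"
  by (elim L_cases) (simp add: L_Fract)
lemma L_diff: "x \<in> L \<Longrightarrow> y \<in> L \<Longrightarrow> x - y \<in> L"
  by (elim L_cases) (simp add: Snz L_Fract Smult)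
lemma L_0: "0 \<in> L" using L_emb[of 0] by (simp add: emb_0)
lemma L_1: "1 \<in> L" using L_emb[of 1] by (simp add: emb_1)
lemma L_sL: "x \<in> L \<Longrightarrow> sL x \<in> L"
  by (elim L_cases) (simp add: Snz sL_Fract L_Fract Ssig')
lemma L_sLp: "x \<in> L \<Longrightarrow> (sL ^^ n) x \<in> L" by (induct n) (simp_all add: L_sL)
lemma L_div: "x \<in> L \<Longrightarrow> s \<in> S \<Longrightarrow> x / emb s \<in> L"
  by (elim L_cases) (simp add: emb_def Snz L_Fract Smult)
lemma L_sum: "(\<And>i. i \<in> A \<Longrightarrow> f i \<in> L) \<Longrightarrow> sum f A \<in> L"
  by (induct A rule: infinite_finite_induct) (simp_all add: L_0 L_add)

end




definition star :: "('a \<Rightarrow> 'a) \<Rightarrow> (nat \<Rightarrow> 'a::comm_ring_1) \<Rightarrow> (nat \<Rightarrow> 'a) \<Rightarrow> nat \<Rightarrow> 'a" where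
  "star s u v k = (\<Sum>i\<le>k. (s ^^ i) (u (k - i)) * v i)"

declare sum.cong[fundef_cong]

function solve :: "('a::field \<Rightarrow> 'a) \<Rightarrow> (nat \<Rightarrow> 'a) \<Rightarrow> (nat \<Rightarrow> 'a) \<Rightarrow> nat \<Rightarrow> 'a" where
  "solve s w b k = (b k - (\<Sum>i\<in>{1..k}. (s ^^ i) (solve s w b (k - i)) * w i)) / w 0"
  by auto
termination by (relation "measure (\<lambda>(s, w, b, k). k)") auto

declare solve.simps[simp del]

lemma star_split: "star s u v k = u k * v 0 + (\<Sum>i\<in>{1..k}. (s ^^ i) (u (k - i)) * v i)"
  unfolding star_def by (simp add: atMost_atLeast0 sum.atLeast_Suc_atMost)

lemma triangle_nested:
  "(\<Sum>i\<le>k. \<Sum>j\<le>k - i. G i j) = (\<Sum>n\<le>(k::nat). \<Sum>i\<le>n. G i (n - i))"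
proof -
  have "(\<Sum>i\<le>k. \<Sum>j\<le>k - i. G i j) = (\<Sum>(i,j)\<in>Sigma {..k} (\<lambda>i. {..k - i}). G i j)"
    by (subst sum.Sigma) auto
  also have "Sigma {..k} (\<lambda>i. {..k - i}) = {(i,j). i + j \<le> k}" by auto
  also have "(\<Sum>(i,j)\<in>{(i,j). i + j \<le> k}. G i j) = (\<Sum>n\<le>k. \<Sum>i\<le>n. G i (n - i))"
    by (rule sum.triangle_reindex_eq)
  finally show ?thesis .
qed

context qloc
begin

lemma star_assoc: "star sL (star sL u v) w k = star sL u (star sL v w) k"
proof -
  have "star sL (star sL u v) w k = (\<Sum>i\<le>k. \<Sum>j\<le>k - i. (sL ^^ (i + j)) (u (k - i - j)) * (sL ^^ i) (v j) * w i)"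
    unfolding star_def by (simp add: sLp_sum sLp_mult sum_distrib_right funpow_add)
  also have "\<dots> = (\<Sum>n\<le>k. \<Sum>i\<le>n. (sL ^^ (i + (n - i))) (u (k - i - (n - i))) * (sL ^^ i) (v (n - i)) * w i)"
    by (rule triangle_nested)
  also have "\<dots> = (\<Sum>n\<le>k. \<Sum>i\<le>n. (sL ^^ n) (u (k - n)) * ((sL ^^ i) (v (n - i)) * w i))"
    by (intro sum.cong refl) (auto simp: mult.assoc)
  also have "\<dots> = star sL u (star sL v w) k"
    unfolding star_def by (simp add: sum_distrib_left)
  finally show ?thesis .
qed

lemma star_add_left: "star sL (\<lambda>k. u k + u' k) v k = star sL u v k + star sL u' v k"
  unfolding star_def by (simp add: sLp_add algebra_simps sum.distrib)

lemma star_add_right: "star sL u (\<lambda>k. v k + v' k) k = star sL u v k + star sL u v' k"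
  unfolding star_def by (simp add: algebra_simps sum.distrib)

lemma star_unit: "star sL u (\<lambda>k. if k = 0 then 1 else 0) k = u k"
proof -
  have "star sL u (\<lambda>k. if k = 0 then 1 else 0) k = (\<Sum>i\<le>k. (sL ^^ i) (u (k - i)) * (if i = 0 then 1 else 0))"
    by (simp add: star_def)
  also have "\<dots> = (sL ^^ 0) (u (k - 0)) * 1" by (subst sum_single[where a=0]) auto
  finally show ?thesis by simp
qed

lemma star_cancel:
  assumes w0: "w 0 \<noteq> 0" and e: "\<And>k. star sL u w k = star sL u' w k"
  shows "u k = u' k"
proof (induct k rule: less_induct)
  case (less k)
  have "(\<Sum>i\<in>{1..k}. (sL ^^ i) (u (k - i)) * w i) = (\<Sum>i\<in>{1..k}. (sL ^^ i) (u' (k - i)) * w i)"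
    using less by (intro sum.cong refl) auto
  with e[of k] have "u k * w 0 = u' k * w 0" unfolding star_split by simp
  thus ?case using w0 by simp
qed

lemma solve_star: "w 0 \<noteq> 0 \<Longrightarrow> star sL (solve sL w b) w k = b k"
  unfolding star_split by (subst solve.simps[of _ _ _ k]) simp

lemma solve_L:
  assumes w0: "w 0 = emb s" and s: "s \<in> S" and wL: "\<And>k. w k \<in> L" and bL: "\<And>k. b k \<in> L"
  shows "solve sL w b k \<in> L"
proof (induct k rule: less_induct)
  case (less k)
  show ?case
    by (subst solve.simps) (use less in \<open>auto intro!: L_div[OF _ s, unfolded w0[symmetric]] L_diff bL L_sum L_mult wL L_sLp\<close>)
qed

end




context qloc
begin

definition Phi :: "'r \<Rightarrow> nat \<Rightarrow> 'r fract" where "Phi a = (\<lambda>k. emb (\<delta> k a))"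

definition unit_seq :: "nat \<Rightarrow> 'r fract" where "unit_seq = (\<lambda>k. if k = 0 then 1 else 0)"

lemma star_assoc': "star sL (star sL u v) w = star sL u (star sL v w)"
  by (rule ext) (rule star_assoc)

lemma Phi_mult: "Phi (a * b) = star sL (Phi a) (Phi b)"
  by (rule ext) (simp add: Phi_def star_def del_mult emb_sum emb_mult sLp_emb)

lemma Phi_add: "Phi (a + b) k = Phi a k + Phi b k"
  by (simp add: Phi_def del_add emb_add)

lemma Phi_1: "Phi 1 = unit_seq"
  by (rule ext) (simp add: Phi_def unit_seq_def del0 del_one emb_0 emb_1)

lemma Phi_0: "Phi a 0 = emb a" by (simp add: Phi_def del0)

lemma Phi_L: "Phi a k \<in> L" by (simp add: Phi_def L_emb)

lemma star_Phi_comm: "star sL (Phi a) (Phi b) = star sL (Phi b) (Phi a)"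
  using Phi_mult[of a b] Phi_mult[of b a] by (simp add: mult.commute)

definition rep :: "'r fract \<Rightarrow> 'r \<times> 'r" where
  "rep x = (SOME p. snd p \<in> S \<and> x = Fract (fst p) (snd p))"

lemma rep_ok: assumes "x \<in> L" shows "snd (rep x) \<in> S" "x = Fract (fst (rep x)) (snd (rep x))"
proof -
  obtain a s where "s \<in> S" "x = Fract a s" using assms by (auto simp: loc_def)
  hence "\<exists>p. snd p \<in> S \<and> x = Fract (fst p) (snd p)" by (intro exI[of _ "(a, s)"]) simp
  hence "snd (rep x) \<in> S \<and> x = Fract (fst (rep x)) (snd (rep x))"
    unfolding rep_def by (rule someI_ex)
  thus "snd (rep x) \<in> S" "x = Fract (fst (rep x)) (snd (rep x))" by auto
qed

definition dL :: "nat \<Rightarrow> 'r fract \<Rightarrow> 'r fract" where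
  "dL k x = solve sL (Phi (snd (rep x))) (Phi (fst (rep x))) k"

lemma dL_char:
  assumes s: "s \<in> S"
  shows "star sL (\<lambda>k. dL k (Fract a s)) (Phi s) = Phi a"
proof -
  define x where "x = Fract a s"
  have xL: "x \<in> L" using s by (simp add: x_def L_Fract)
  define a' where "a' = fst (rep x)"
  define s' where "s' = snd (rep x)"
  have s': "s' \<in> S" using rep_ok(1)[OF xL] by (simp only: s'_def)
  have xe: "x = Fract a' s'" using rep_ok(2)[OF xL] unfolding a'_def s'_def .
  define u where "u = (\<lambda>k. dL k x)"
  have u: "star sL u (Phi s') = Phi a'"
  proof (rule ext)
    fix k
    have "Phi (snd (rep x)) 0 \<noteq> 0" using s' by (simp add: s'_def Phi_0 emb_nz Snz)
    thus "star sL u (Phi s') k = Phi a' k"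
      unfolding u_def dL_def a'_def s'_def by (rule solve_star)
  qed
  have eq: "a * s' = a' * s" using xe x_def Snz[OF s] Snz[OF s'] by (simp add: eq_fract)
  have "star sL (star sL u (Phi s)) (Phi s') = star sL (Phi a) (Phi s')"
  proof -
    have "star sL (star sL u (Phi s)) (Phi s') = star sL u (star sL (Phi s') (Phi s))"
      by (simp only: star_assoc' star_Phi_comm[of s s'])
    also have "\<dots> = star sL (Phi a') (Phi s)" by (simp only: star_assoc'[symmetric] u)
    also have "\<dots> = Phi (a' * s)" by (simp add: Phi_mult)
    also have "\<dots> = star sL (Phi a) (Phi s')" by (simp add: Phi_mult[symmetric] eq)
    finally show ?thesis .
  qed
  hence h: "star sL (star sL u (Phi s)) (Phi s') k = star sL (Phi a) (Phi s') k" for k by simp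
  have "star sL u (Phi s) k = Phi a k" for k
    by (rule star_cancel[of "Phi s'"]) (simp_all add: Phi_0 emb_nz Snz[OF s'] h)
  thus ?thesis by (simp add: u_def x_def fun_eq_iff)
qed

lemma dL_uniq:
  assumes s: "s \<in> S" and e: "star sL u (Phi s) = Phi a"
  shows "u k = dL k (Fract a s)"
  by (rule star_cancel[of "Phi s"]) (use s e dL_char[OF s, of a] in \<open>auto simp: Phi_0 emb_nz Snz\<close>)

lemma dL_L: assumes "x \<in> L" shows "dL k x \<in> L"
  unfolding dL_def using rep_ok[OF assms]
  by (intro solve_L[of _ "snd (rep x)"]) (auto simp: Phi_0 Phi_L)

lemma dL_emb: "dL k (Fract a 1) = Fract (\<delta> k a) 1"
proof -
  have "star sL (Phi a) (Phi 1) = Phi a" by (rule ext) (simp add: Phi_1 unit_seq_def star_unit)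
  from dL_uniq[OF S1 this] show ?thesis by (simp add: Phi_def emb_def)
qed

lemma dL_0: assumes "x \<in> L" shows "dL 0 x = x"
proof -
  obtain a s where s: "s \<in> S" and x: "x = Fract a s" using assms by (auto simp: loc_def)
  have "star sL (\<lambda>k. dL k x) (Phi s) 0 = Phi a 0" using dL_char[OF s] x by simp
  hence h: "dL 0 x * emb s = emb a" by (simp add: star_def Phi_0)
  have xx: "x = emb a / emb s" using x Snz[OF s] by (simp add: Fract_emb)
  have "dL 0 x = emb a / emb s" using h emb_nz[OF Snz[OF s]] by (simp add: eq_divide_eq)
  thus ?thesis using xx by simp
qed

lemma dL_add: assumes "x \<in> L" "y \<in> L" shows "dL k (x + y) = dL k x + dL k y"
proof -
  obtain a s where s: "s \<in> S" and x: "x = Fract a s" using assms by (auto simp: loc_def)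
  obtain b t where t: "t \<in> S" and y: "y = Fract b t" using assms by (auto simp: loc_def)
  have xy: "x + y = Fract (a * t + b * s) (s * t)" using x y Snz[OF s] Snz[OF t] by simp
  have "star sL (\<lambda>k. dL k x + dL k y) (Phi (s * t)) = Phi (a * t + b * s)"
  proof (rule ext)
    fix k
    have "star sL (\<lambda>k. dL k x + dL k y) (Phi (s * t)) k
       = star sL (\<lambda>k. dL k x) (Phi (s * t)) k + star sL (\<lambda>k. dL k y) (Phi (t * s)) k"
      by (simp add: star_add_left mult.commute)
    also have "\<dots> = star sL (Phi a) (Phi t) k + star sL (Phi b) (Phi s) k"
      unfolding Phi_mult star_assoc'[symmetric] using dL_char[OF s, of a] dL_char[OF t, of b] x y by simp
    also have "\<dots> = Phi (a * t + b * s) k" by (simp add: Phi_mult[symmetric] Phi_add)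
    finally show "star sL (\<lambda>k. dL k x + dL k y) (Phi (s * t)) k = Phi (a * t + b * s) k" .
  qed
  from dL_uniq[OF Smult[OF s t] this] xy show ?thesis by simp
qed

lemma dL_mult: assumes "x \<in> L" "y \<in> L"
  shows "dL k (x * y) = (\<Sum>i\<le>k. (sL ^^ i) (dL (k - i) x) * dL i y)"
proof -
  obtain a s where s: "s \<in> S" and x: "x = Fract a s" using assms by (auto simp: loc_def)
  obtain b t where t: "t \<in> S" and y: "y = Fract b t" using assms by (auto simp: loc_def)
  have xy: "x * y = Fract (a * b) (s * t)" using x y by simp
  define u where "u = (\<lambda>k. dL k x)"
  define v where "v = (\<lambda>k. dL k y)"
  have hu: "star sL u (Phi s) = Phi a" using dL_char[OF s, of a] x by (simp add: u_def)
  have hv: "star sL v (Phi t) = Phi b" using dL_char[OF t, of b] y by (simp add: v_def)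
  have "star sL (star sL u v) (Phi (s * t)) = Phi (a * b)"
  proof -
    have "star sL (star sL u v) (Phi (s * t)) = star sL u (star sL (star sL v (Phi t)) (Phi s))"
      by (simp add: mult.commute[of s t] Phi_mult star_assoc')
    also have "\<dots> = star sL u (star sL (Phi s) (Phi b))" by (simp add: hv star_Phi_comm)
    also have "\<dots> = Phi (a * b)" by (simp add: star_assoc'[symmetric] hu Phi_mult)
    finally show ?thesis .
  qed
  from dL_uniq[OF Smult[OF s t] this] xy show ?thesis by (simp add: star_def u_def v_def)
qed

lemma dL_1: assumes "x \<in> L"
  shows "dL 1 x = loc_iota \<iota> (inverse (Fract [:q - 1:] 1 * tvar)) * (sL x - x)"
proof -
  obtain a s where s: "s \<in> S" and x: "x = Fract a s" using assms by (auto simp: loc_def)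
  have sn: "emb s \<noteq> 0" "emb (\<sigma> s) \<noteq> 0" using Snz[OF s] emb_nz sig_nz by auto
  have "star sL (\<lambda>k. dL k x) (Phi s) 1 = Phi a 1" using dL_char[OF s] x by simp
  hence "dL 1 x * emb s + sL (dL 0 x) * emb (\<delta> 1 s) = emb (\<delta> 1 a)"
    by (simp add: star_split Phi_def del0)
  hence e: "dL 1 x * emb s + sL x * (emb WW * (emb (\<sigma> s) - emb s)) = emb WW * (emb (\<sigma> a) - emb a)"
    using dL_0[OF assms] del1[of s] del1[of a] by (simp add: emb_mult emb_diff)
  have "sL x = Fract (\<sigma> a) (\<sigma> s)" using x Snz[OF s] by (simp add: sL_Fract)
  hence sx: "sL x = emb (\<sigma> a) / emb (\<sigma> s)" using Snz[OF s] sig_nz by (simp add: Fract_emb)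
  have xx: "x = emb a / emb s" using x Snz[OF s] by (simp add: Fract_emb)
  have li: "loc_iota \<iota> (inverse (Fract [:q - 1:] 1 * tvar)) = emb WW"
    unfolding loc_iota_def emb_def WW_def W_eq[OF q1] ..
  have aux: "U = W * (ta / ets - a0 / es)"
    if "es \<noteq> 0" "ets \<noteq> 0" "U * es + (ta / ets) * (W * (ets - es)) = W * (ta - a0)"
    for U W ta ets a0 es :: "'r fract"
  proof -
    from that(3) have "U * es * ets + ta * (W * (ets - es)) = W * (ta - a0) * ets"
      using that(2) by (simp add: field_simps)
    hence "U * es * ets = W * (ta * es - a0 * ets)" by (simp add: algebra_simps)
    thus ?thesis using that(1,2) by (simp add: field_simps)
  qed
  have h: "dL 1 x = emb WW * (emb (\<sigma> a) / emb (\<sigma> s) - emb a / emb s)"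
    by (rule aux[OF sn e[unfolded sx]])
  have h2: "sL x - x = emb (\<sigma> a) / emb (\<sigma> s) - emb a / emb s" using sx xx by simp
  have "dL 1 x = emb WW * (sL x - x)" unfolding h2 by (rule h)
  thus ?thesis using li by simp
qed

lemma sL_sum: "sL (sum f A) = (\<Sum>x\<in>A. sL (f x))" using sLp_sum[of 1] by simp

definition Tw :: "(nat \<Rightarrow> 'r fract) \<Rightarrow> nat \<Rightarrow> 'r fract" where
  "Tw u = (\<lambda>k. EC q ^ k * sL (u k))"

lemma Tw_star: "Tw (star sL u v) = star sL (Tw u) (Tw v)"
proof (rule ext)
  fix k
  have "Tw (star sL u v) k = (\<Sum>i\<le>k. EC q ^ k * (sL ^^ Suc i) (u (k - i)) * sL (v i))"
    by (simp add: Tw_def star_def sum_distrib_left sL_mult sL_sum mult.assoc funpow_swap1)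
  also have "\<dots> = (\<Sum>i\<le>k. (sL ^^ i) (EC q ^ (k - i) * sL (u (k - i))) * (EC q ^ i * sL (v i)))"
  proof (intro sum.cong refl)
    fix i assume "i \<in> {..k}"
    hence "EC q ^ k = EC q ^ (k - i) * EC q ^ i" by (simp add: power_add[symmetric])
    thus "EC q ^ k * (sL ^^ Suc i) (u (k - i)) * sL (v i) = (sL ^^ i) (EC q ^ (k - i) * sL (u (k - i))) * (EC q ^ i * sL (v i))"
      by (simp add: sLp_mult sLp_pow sLp_EC funpow_swap1 mult_ac)
  qed
  also have "\<dots> = star sL (Tw u) (Tw v) k" by (simp add: star_def Tw_def)
  finally show "Tw (star sL u v) k = star sL (Tw u) (Tw v) k" .
qed

lemma Phi_sig: "Phi (\<sigma> a) = Tw (Phi a)"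
  by (rule ext) (simp add: Phi_def Tw_def del_sig emb_mult emb_pow EC_def sL_emb)

lemma dL_sL: assumes "x \<in> L" shows "dL k (sL x) = EC q ^ k * sL (dL k x)"
proof -
  obtain a s where s: "s \<in> S" and x: "x = Fract a s" using assms by (auto simp: loc_def)
  have sx: "sL x = Fract (\<sigma> a) (\<sigma> s)" using x Snz[OF s] by (simp add: sL_Fract)
  have "star sL (Tw (\<lambda>k. dL k x)) (Phi (\<sigma> s)) = Phi (\<sigma> a)"
    using dL_char[OF s, of a] x by (simp add: Phi_sig Tw_star[symmetric])
  from dL_uniq[OF Ssig'[OF s] this] sx show ?thesis by (simp add: Tw_def)
qed

end




context qloc
begin

lemma EC_mult: "EC (a * b) = EC a * EC b" by (simp add: EC_def ic_mult emb_mult)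
lemma EC_pow: "EC (a ^ n) = EC a ^ n" by (simp add: EC_def ic_pow emb_pow)
lemma EC_1: "EC 1 = 1" by (simp add: EC_def ic_1 emb_1)
lemma EC_sum: "EC (sum f A) = (\<Sum>x\<in>A. EC (f x))" by (simp add: EC_def ic_sum emb_sum)

lemma L_double_expand:
  assumes "x \<in> L" "y \<in> L"
  shows "dL i (dL j (x * y)) = (\<Sum>l\<le>i. \<Sum>m\<le>j. EC q ^ (m * (i - l)) * (sL ^^ (l + m)) (dL (i - l) (dL (j - m) x)) * dL l (dL m y))"
  by (rule double_expand[where A=L]) (use assms in \<open>simp_all add: dL_L L_sL L_add L_mult L_0 dL_add dL_mult dL_sL sL_add sL_mult sL_1 sL_EC\<close>)

lemma dL_comp:
  assumes xL: "x \<in> L"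
  shows "dL i (dL j x) = EC (qbinom (i + j) i q) * dL (i + j) x"
proof -
  obtain a s where s: "s \<in> S" and x: "x = Fract a s" using xL by (auto simp: loc_def)
  define u where "u = (\<lambda>k. dL k x)"
  have hu: "star sL u (Phi s) k = Phi a k" for k using dL_char[OF s, of a] x by (simp add: u_def)
  have xs: "x * emb s = emb a" using x Snz[OF s] by (simp add: emb_def eq_fract mult.commute)
  have main: "\<forall>i j. i + j = N \<longrightarrow> dL i (u j) = EC (qbinom N i q) * u N" for N
  proof (induct N rule: less_induct)
    case (less N)
    show ?case
    proof (intro allI impI)
      fix i j assume Nij: "i + j = N"
      define T where "T = (\<lambda>l m. EC q ^ (m * (i - l)) * (sL ^^ (l + m)) (EC (qbinom (N - (l + m)) (i - l) q) * u (N - (l + m)))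
                           * (EC (qbinom (l + m) l q) * Phi s (l + m)))"
      define D where "D = (dL i (u j) - EC (qbinom N i q) * u N) * emb s"
      have act: "EC q ^ (m * (i - l)) * (sL ^^ (l + m)) (dL (i - l) (dL (j - m) x)) * dL l (dL m (emb s))
                 = T l m + (if l = 0 \<and> m = 0 then D else 0)" if lm: "l \<le> i" "m \<le> j" for l m
      proof -
        have dd: "dL l (dL m (emb s)) = EC (qbinom (l + m) l q) * Phi s (l + m)"
          by (simp add: emb_def dL_emb del_comp Phi_def EC_def emb_mult)
        show ?thesis
        proof (cases "l = 0 \<and> m = 0")
          case True
          thus ?thesis using Nij
            by (simp add: T_def D_def dd qbinom_0 EC_1 Phi_0 u_def dL_0 L_emb algebra_simps)
        next
          case False
          have "dL (i - l) (dL (j - m) x) = EC (qbinom (N - (l + m)) (i - l) q) * u (N - (l + m))"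
          proof -
            have "(i - l) + (j - m) < N" "(i - l) + (j - m) = N - (l + m)" using False lm Nij by auto
            thus ?thesis using less[of "(i - l) + (j - m)"] by (auto simp: u_def)
          qed
          thus ?thesis using False by (auto simp: T_def dd)
        qed
      qed
      have lhs: "dL i (dL j (x * emb s)) = EC (qbinom N i q) * Phi a N"
        unfolding xs using Nij by (simp add: emb_def dL_emb del_comp Phi_def EC_def emb_mult)
      have "dL i (dL j (x * emb s)) = (\<Sum>l\<le>i. \<Sum>m\<le>j. T l m + (if l = 0 \<and> m = 0 then D else 0))"
        unfolding L_double_expand[OF xL L_emb] by (intro sum.cong refl) (simp add: act)
      also have "\<dots> = (\<Sum>l\<le>i. \<Sum>m\<le>j. T l m) + D"
      proof -
        have "(\<Sum>l\<le>i. \<Sum>m\<le>j. (if l = 0 \<and> m = 0 then D else 0)) = (\<Sum>l\<le>i. if l = 0 then D else 0)"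
          by (intro sum.cong refl) (auto simp: sum.delta)
        also have "\<dots> = D" by (simp add: sum.delta)
        finally show ?thesis by (simp add: sum.distrib)
      qed
      also have "(\<Sum>l\<le>i. \<Sum>m\<le>j. T l m) = (\<Sum>n\<le>i+j. \<Sum>l\<in>Lset i j n. T l (n - l))"
        by (rule sum_reindex_lm)
      also have "\<dots> = (\<Sum>n\<le>N. EC (qbinom N i q) * ((sL ^^ n) (u (N - n)) * Phi s n))"
      proof (unfold Nij, intro sum.cong refl)
        fix n assume n: "n \<in> {..N}"
        have "(\<Sum>l\<in>Lset i j n. T l (n - l)) = (\<Sum>l\<in>Lset i j n. EC (q ^ ((n - l) * (i - l)) * qbinom (N - n) (i - l) q * qbinom n l q)
                 * ((sL ^^ n) (u (N - n)) * Phi s n))"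
          by (intro sum.cong refl) (auto simp: Lset_def T_def sLp_mult sLp_EC EC_mult EC_pow mult_ac)
        also have "\<dots> = EC (\<Sum>l\<in>Lset i j n. q ^ ((n - l) * (i - l)) * qbinom (N - n) (i - l) q * qbinom n l q)
                 * ((sL ^^ n) (u (N - n)) * Phi s n)"
          by (simp add: EC_sum sum_distrib_right)
        also have "(\<Sum>l\<in>Lset i j n. q ^ ((n - l) * (i - l)) * qbinom (N - n) (i - l) q * qbinom n l q) = qbinom N i q"
        proof -
          have "N - i = j" using Nij by simp
          thus ?thesis using qvand[of i N n] n Nij by simp
        qed
        finally show "(\<Sum>l\<in>Lset i j n. T l (n - l)) = EC (qbinom N i q) * ((sL ^^ n) (u (N - n)) * Phi s n)" .
      qed
      also have "\<dots> = EC (qbinom N i q) * Phi a N"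
        using hu[of N] by (simp add: star_def sum_distrib_left[symmetric])
      finally have "D = 0" using lhs by simp
      thus "dL i (u j) = EC (qbinom N i q) * u N"
        using emb_nz[OF Snz[OF s]] by (simp add: D_def)
    qed
  qed
  thus ?thesis using main[of "i + j"] by (simp add: u_def)
qed

end



theorem proposition2p19:
  fixes q :: "'c::field"
    and \<iota> :: "'c ratfun \<Rightarrow> 'r::idom"
    and \<sigma> :: "'r \<Rightarrow> 'r"
    and \<delta> :: "nat \<Rightarrow> 'r \<Rightarrow> 'r"
    and S :: "'r set"
  assumes "alg_closed TYPE('c)"
    and "q \<noteq> 1" and "q \<noteq> 0"
    and "iter_qdiff_ring q \<iota> \<sigma> \<delta>"
    and "mult_closed S" and "0 \<notin> S" and "\<sigma> ` S \<subseteq> S"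
  shows "\<exists>\<delta>L :: nat \<Rightarrow> 'r fract \<Rightarrow> 'r fract.
           iter_qdiff_op q (loc_iota \<iota>) (loc_sigma \<sigma>) (loc S) \<delta>L
         \<and> (\<forall>k a. \<delta>L k (Fract a 1) = Fract (\<delta> k a) 1)
         \<and> (\<forall>\<delta>'. iter_qdiff_op q (loc_iota \<iota>) (loc_sigma \<sigma>) (loc S) \<delta>'
                  \<and> (\<forall>k a. \<delta>' k (Fract a 1) = Fract (\<delta> k a) 1)
                  \<longrightarrow> (\<forall>k. \<forall>x\<in>loc S. \<delta>' k x = \<delta>L k x))"
proof -
  interpret qloc q \<iota> \<sigma> \<delta> S
    by unfold_locales (use assms in auto)
  have op: "iter_qdiff_op q (loc_iota \<iota>) (loc_sigma \<sigma>) (loc S) dL"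
  proof -
    have li: "loc_iota \<iota> (Fract [:c:] 1) = EC c" for c
      by (simp add: loc_iota_def EC_def emb_def ic_def cst_def)
    show ?thesis unfolding iter_qdiff_op_def li
      by (intro conjI allI ballI; (rule dL_L | rule dL_0 | rule dL_1 | rule dL_add | rule dL_mult | rule dL_comp); assumption)
  qed
  have uniq: "\<delta>' k x = dL k x"
    if op': "iter_qdiff_op q (loc_iota \<iota>) (loc_sigma \<sigma>) (loc S) \<delta>'"
      and ext': "\<forall>k a. \<delta>' k (Fract a 1) = Fract (\<delta> k a) 1" and xL: "x \<in> loc S" for \<delta>' k x
  proof -
    obtain a s where s: "s \<in> S" and x: "x = Fract a s" using xL by (auto simp: loc_def)
    have sL1: "Fract s 1 \<in> loc S" using S1 by (rule L_Fract)
    have xs: "x * Fract s 1 = Fract a 1" using x Snz[OF s] by (simp add: eq_fract mult.commute)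
    have "star sL (\<lambda>k. \<delta>' k x) (Phi s) = Phi a"
    proof (rule ext)
      fix k
      have "\<delta>' k (x * Fract s 1) = (\<Sum>i\<le>k. (sL ^^ i) (\<delta>' (k - i) x) * \<delta>' i (Fract s 1))"
        using op' xL sL1 unfolding iter_qdiff_op_def by blast
      thus "star sL (\<lambda>k. \<delta>' k x) (Phi s) k = Phi a k"
        using ext' xs by (simp add: star_def Phi_def emb_def)
    qed
    from dL_uniq[OF s this] x show ?thesis by simp
  qed
  show ?thesis
    by (rule exI[of _ dL]) (use op dL_emb uniq in blast)
qed

end
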